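(* Let $S\subset\mathbb{Z}^d$ be a finite set, $\mathcal{P}=\{P_\alpha\}_{\alpha\in S}$ a resolution of unity on $\mathbb{C}^D$ and $C$ a $D\times D$ unitary matrix. If $U(S,\mathcal{P},C)$ has an eigenvalue, then there exist a nonzero vector $\phi\in\mathbb{C}^D$ and a point $x_o\in\mathbb{Z}^d$ such that $\limsup_{n\to\infty}p_n(\phi;x_o)>0$.
   Context: A resolution of unity on $\mathbb{C}^D$ indexed by a finite $S\subset\mathbb{Z}^d$ is a family of orthogonal projections $P_\alpha$ with $P_\alpha P_\beta=0$ for $\alpha\ne\beta$ and $\sum_{\alpha\in S}P_\alpha=I$. For $\alpha\in\mathbb{Z}^d$, $\tau^\alpha$ acts on $\ell^2(\mathbb{Z}^d,\mathbb{C}^D)$ by $(\tau^\alpha f)(x)=f(x-\alpha)$. $U(S,\mathcal{P},C)=\big(\sum_{\alpha\in S}\tau^\alpha P_\alpha\big)C$, with $C$ acting pointwise. $\delta_0\otimes\phi$ is the function equal to $\phi$ at $0$ and $0$ elsewhere and $p_n(\phi;x)=\|U(S,\mathcal{P},C)^n(\delta_0\otimes\phi)(x)\|^2_{\mathbb{C}^D}$. Eigenvalue means an element of the point spectrum. *)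

theory Defs
  imports "HOL-Analysis.Analysis"
begin

definition mat_adjoint :: "complex^'D^'D \<Rightarrow> complex^'D^'D" where
  "mat_adjoint A = (\<chi> i j. cnj (A $ j $ i))"

definition orth_proj :: "complex^'D^'D \<Rightarrow> bool" where
  "orth_proj P \<longleftrightarrow> P ** P = P \<and> mat_adjoint P = P"

definition unitary_mat :: "complex^'D^'D \<Rightarrow> bool" where
  "unitary_mat C \<longleftrightarrow> mat_adjoint C ** C = mat 1 \<and> C ** mat_adjoint C = mat 1"

definition resolution_of_unity :: "(int^'d) set \<Rightarrow> (int^'d \<Rightarrow> complex^'D^'D) \<Rightarrow> bool" where
  "resolution_of_unity S P \<longleftrightarrow>
     (\<forall>\<alpha>\<in>S. orth_proj (P \<alpha>)) \<and>
     (\<forall>\<alpha>\<in>S. \<forall>\<beta>\<in>S. \<alpha> \<noteq> \<beta> \<longrightarrow> P \<alpha> ** P \<beta> = 0) \<and>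
     (\<Sum>\<alpha>\<in>S. P \<alpha>) = mat 1"

definition l2_fun :: "(int^'d \<Rightarrow> complex^'D) \<Rightarrow> bool" where
  "l2_fun f \<longleftrightarrow> (\<lambda>x. (norm (f x))^2) summable_on UNIV"

text \<open>U(S,P,C) = (\<Sum>_{\<alpha>\<in>S} \<tau>^\<alpha> P_\<alpha>) C, with (\<tau>^\<alpha> g)(x) = g(x - \<alpha>).\<close>
definition U_op :: "(int^'d) set \<Rightarrow> (int^'d \<Rightarrow> complex^'D^'D) \<Rightarrow> complex^'D^'D
                    \<Rightarrow> (int^'d \<Rightarrow> complex^'D) \<Rightarrow> (int^'d \<Rightarrow> complex^'D)" where
  "U_op S P C f = (\<lambda>x. \<Sum>\<alpha>\<in>S. P \<alpha> *v (C *v f (x - \<alpha>)))"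

definition has_eigenvalue :: "(int^'d) set \<Rightarrow> (int^'d \<Rightarrow> complex^'D^'D) \<Rightarrow> complex^'D^'D \<Rightarrow> bool" where
  "has_eigenvalue S P C \<longleftrightarrow>
     (\<exists>\<mu>::complex. \<exists>f. l2_fun f \<and> f \<noteq> (\<lambda>x. 0) \<and> U_op S P C f = (\<lambda>x. \<mu> *s f x))"

definition delta0 :: "complex^'D \<Rightarrow> (int^'d \<Rightarrow> complex^'D)" where
  "delta0 \<phi> = (\<lambda>x. if x = 0 then \<phi> else 0)"

definition p_prob :: "(int^'d) set \<Rightarrow> (int^'d \<Rightarrow> complex^'D^'D) \<Rightarrow> complex^'D^'D
                      \<Rightarrow> nat \<Rightarrow> complex^'D \<Rightarrow> int^'d \<Rightarrow> real" where
  "p_prob S P C n \<phi> x = (norm (((U_op S P C) ^^ n) (delta0 \<phi>) x))^2"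

end

theory Submission
  imports Defs
begin

definition cinner :: "complex^'n \<Rightarrow> complex^'n \<Rightarrow> complex" where
  "cinner v w = (\<Sum>i\<in>UNIV. v$i * cnj (w$i))"

lemma norm_sq_vec: "norm (v::complex^'n) ^ 2 = (\<Sum>i\<in>UNIV. (cmod (v$i))^2)"
  unfolding norm_vec_def L2_set_def by (simp add: sum_nonneg)

lemma cinner_self: "cinner v v = complex_of_real (norm v ^ 2)"
  unfolding cinner_def norm_sq_vec of_real_sum by (rule sum.cong) (simp_all add: complex_norm_square[symmetric])

lemma cinner_bound: "cmod (cinner a b) \<le> norm a ^ 2 / 4 + norm b ^ 2"
proof -
  have "cmod (cinner a b) \<le> (\<Sum>i\<in>UNIV. cmod (a$i) * cmod (b$i))"
    unfolding cinner_def by (rule order_trans[OF norm_sum]) (simp add: norm_mult)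
  also have "\<dots> \<le> (\<Sum>i\<in>UNIV. (cmod (a$i))^2/4 + (cmod (b$i))^2)"
  proof (rule sum_mono)
    fix i
    have "0 \<le> (cmod (a$i)/2 - cmod (b$i))^2" by simp
    then show "cmod (a$i) * cmod (b$i) \<le> (cmod (a$i))^2/4 + (cmod (b$i))^2"
      by (simp add: power2_eq_square algebra_simps)
  qed
  also have "\<dots> = norm a ^ 2 / 4 + norm b ^ 2"
    by (simp add: norm_sq_vec sum.distrib sum_divide_distrib)
  finally show ?thesis .
qed

lemma cinner_bound2: "cmod (cinner a b) \<le> norm a * (\<Sum>i\<in>UNIV. cmod (b$i))"
proof -
  have "cmod (cinner a b) \<le> (\<Sum>i\<in>UNIV. cmod (a$i) * cmod (b$i))"
    unfolding cinner_def by (rule order_trans[OF norm_sum]) (simp add: norm_mult)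
  also have "\<dots> \<le> (\<Sum>i\<in>UNIV. norm a * cmod (b$i))"
    by (rule sum_mono, rule mult_right_mono[OF Finite_Cartesian_Product.norm_nth_le], simp)
  finally show ?thesis by (simp add: sum_distrib_left)
qed

lemma cinner_adj: "cinner (A *v v) w = cinner v (mat_adjoint A *v w)"
  unfolding cinner_def mat_adjoint_def matrix_vector_mult_def
  by (simp add: sum_distrib_left sum_distrib_right mult_ac) (rule sum.swap)

lemma cinner_sum_left: "cinner (\<Sum>a\<in>S. f a) w = (\<Sum>a\<in>S. cinner (f a) w)"
  unfolding cinner_def by (simp add: sum_distrib_right sum.swap[of _ S])

lemma cinner_sum_right: "cinner v (\<Sum>a\<in>S. f a) = (\<Sum>a\<in>S. cinner v (f a))"
  unfolding cinner_def by (simp add: sum_distrib_left sum.swap[of _ S])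

lemma cinner_scale_right: "cinner v (c *s w) = cnj c * cinner v w"
  unfolding cinner_def by (simp add: sum_distrib_left mult_ac)

lemma cinner_zero_left[simp]: "cinner 0 w = 0" unfolding cinner_def by simp

lemma matrix_bound: "\<exists>K\<ge>0. \<forall>v. norm ((A::complex^'n^'m) *v v) \<le> K * norm v"
proof (intro exI[of _ "\<Sum>i\<in>UNIV. \<Sum>j\<in>UNIV. cmod (A$i$j)"] conjI allI)
  fix v :: "complex^'n"
  have "norm (A *v v) \<le> (\<Sum>i\<in>UNIV. cmod ((A *v v)$i))"
    unfolding norm_vec_def by (rule L2_set_le_sum) simp
  also have "\<dots> \<le> (\<Sum>i\<in>UNIV. \<Sum>j\<in>UNIV. cmod (A$i$j) * norm v)"
  proof (rule sum_mono)
    fix i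
    have "cmod ((A *v v)$i) \<le> (\<Sum>j\<in>UNIV. cmod (A$i$j) * cmod (v$j))"
      unfolding matrix_vector_mult_def by (simp add: order_trans[OF norm_sum] norm_mult)
    also have "\<dots> \<le> (\<Sum>j\<in>UNIV. cmod (A$i$j) * norm v)"
      by (rule sum_mono, rule mult_left_mono[OF Finite_Cartesian_Product.norm_nth_le], simp)
    finally show "cmod ((A *v v)$i) \<le> (\<Sum>j\<in>UNIV. cmod (A$i$j) * norm v)" .
  qed
  finally show "norm (A *v v) \<le> (\<Sum>i\<in>UNIV. \<Sum>j\<in>UNIV. cmod (A$i$j)) * norm v"
    by (simp add: sum_distrib_right)
qed (simp add: sum_nonneg)


lemma mv_sum: "(\<Sum>a\<in>S. (P a :: complex^'n^'m)) *v v = (\<Sum>a\<in>S. P a *v v)"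
  unfolding vec_eq_iff
proof
  fix i
  show "((\<Sum>a\<in>S. P a) *v v) $ i = (\<Sum>a\<in>S. P a *v v) $ i"
    by (simp add: matrix_vector_mult_def sum_component sum_distrib_right) (rule sum.swap)
qed

lemma orth_pair:
  assumes "resolution_of_unity S P" "\<alpha> \<in> S" "\<beta> \<in> S"
  shows "cinner (P \<alpha> *v a) (P \<beta> *v b) = (if \<alpha> = \<beta> then cinner a (P \<alpha> *v b) else 0)"
proof -
  have adj: "mat_adjoint (P \<alpha>) = P \<alpha>" and idem: "P \<alpha> ** P \<alpha> = P \<alpha>"
    using assms unfolding resolution_of_unity_def orth_proj_def by auto
  have "cinner (P \<alpha> *v a) (P \<beta> *v b) = cinner a ((P \<alpha> ** P \<beta>) *v b)"
    by (simp add: cinner_adj adj matrix_vector_mul_assoc)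
  moreover have "\<alpha> \<noteq> \<beta> \<Longrightarrow> P \<alpha> ** P \<beta> = 0" using assms unfolding resolution_of_unity_def by blast
  ultimately show ?thesis using idem by (auto simp: cinner_def)
qed

lemma pointwise_orth:
  assumes "finite S" "resolution_of_unity S P"
  shows "cinner (\<Sum>\<alpha>\<in>S. P \<alpha> *v a \<alpha>) (\<Sum>\<beta>\<in>S. P \<beta> *v b \<beta>) = (\<Sum>\<alpha>\<in>S. cinner (a \<alpha>) (P \<alpha> *v b \<alpha>))"
proof -
  have "cinner (\<Sum>\<alpha>\<in>S. P \<alpha> *v a \<alpha>) (\<Sum>\<beta>\<in>S. P \<beta> *v b \<beta>)
      = (\<Sum>\<alpha>\<in>S. \<Sum>\<beta>\<in>S. cinner (P \<alpha> *v a \<alpha>) (P \<beta> *v b \<beta>))"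
    by (simp add: cinner_sum_left cinner_sum_right) (rule sum.swap)
  also have "\<dots> = (\<Sum>\<alpha>\<in>S. \<Sum>\<beta>\<in>S. (if \<alpha> = \<beta> then cinner (a \<alpha>) (P \<alpha> *v b \<beta>) else 0))"
    by (intro sum.cong refl) (simp add: orth_pair[OF assms(2)])
  also have "\<dots> = (\<Sum>\<alpha>\<in>S. cinner (a \<alpha>) (P \<alpha> *v b \<alpha>))"
    using assms(1) by (simp add: sum.delta)
  finally show ?thesis .
qed

lemma res_sum:
  assumes "resolution_of_unity S P"
  shows "(\<Sum>\<alpha>\<in>S. cinner a (P \<alpha> *v b)) = cinner a b"
proof -
  have "(\<Sum>\<alpha>\<in>S. P \<alpha>) = mat 1" using assms unfolding resolution_of_unity_def by auto
  then have "(\<Sum>\<alpha>\<in>S. P \<alpha> *v b) = b" using mv_sum[of P S b] by simp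
  then show ?thesis by (metis cinner_sum_right)
qed

lemma unitary_inner:
  assumes "unitary_mat C"
  shows "cinner (C *v a) (C *v b) = cinner a b"
proof -
  have "mat_adjoint C ** C = mat 1" using assms unfolding unitary_mat_def by auto
  then show ?thesis
    by (simp add: cinner_adj matrix_vector_mul_assoc)
qed

lemma bij_shift: "bij_betw (\<lambda>x. x - a) UNIV (UNIV :: (int^'d) set)"
  by (rule bij_betwI[where g="\<lambda>x. x + a"]) auto

lemma infsum_finite_sum:
  fixes f :: "'i \<Rightarrow> 'a \<Rightarrow> 'b::{topological_comm_monoid_add, t2_space}"
  assumes "finite S" "\<And>a. a \<in> S \<Longrightarrow> f a summable_on A"
  shows "(\<lambda>x. \<Sum>a\<in>S. f a x) summable_on A \<and> infsum (\<lambda>x. \<Sum>a\<in>S. f a x) A = (\<Sum>a\<in>S. infsum (f a) A)"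
  using assms
proof (induction S rule: finite_induct)
  case empty then show ?case by simp
next
  case (insert s S)
  then have h1: "f s summable_on A" and h2: "(\<lambda>x. \<Sum>a\<in>S. f a x) summable_on A"
    and h3: "infsum (\<lambda>x. \<Sum>a\<in>S. f a x) A = (\<Sum>a\<in>S. infsum (f a) A)" by auto
  have eq: "(\<lambda>x. \<Sum>a\<in>insert s S. f a x) = (\<lambda>x. f s x + (\<Sum>a\<in>S. f a x))"
    using insert(1,2) by simp
  have "(\<lambda>x. f s x + (\<Sum>a\<in>S. f a x)) summable_on A" by (rule summable_on_add[OF h1 h2])
  moreover have "infsum (\<lambda>x. f s x + (\<Sum>a\<in>S. f a x)) A = infsum (f s) A + (\<Sum>a\<in>S. infsum (f a) A)"
    using infsum_add[OF h1 h2] h3 by simp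
  ultimately show ?case unfolding eq sum.insert[OF insert(1,2)] by blast
qed

lemma abs_summable_inner:
  assumes "l2_fun h" "l2_fun k"
  shows "(\<lambda>y. cmod (cinner (A *v h y) (B *v k y))) summable_on UNIV"
proof -
  obtain K1 where K1: "K1 \<ge> 0" "\<And>v. norm (A *v v) \<le> K1 * norm v" using matrix_bound by blast
  obtain K2 where K2: "K2 \<ge> 0" "\<And>v. norm (B *v v) \<le> K2 * norm v" using matrix_bound by blast
  have s: "(\<lambda>y. K1^2 / 4 * (norm (h y))^2 + K2^2 * (norm (k y))^2) summable_on UNIV"
    using assms unfolding l2_fun_def by (intro summable_on_add summable_on_cmult_right)
  show ?thesis
  proof (rule summable_on_comparison_test[OF s])
    fix y
    have "cmod (cinner (A *v h y) (B *v k y)) \<le> norm (A *v h y) ^ 2 / 4 + norm (B *v k y) ^ 2"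
      by (rule cinner_bound)
    also have "\<dots> \<le> (K1 * norm (h y))^2 / 4 + (K2 * norm (k y))^2"
      using K1 K2 by (intro add_mono divide_right_mono power_mono) auto
    finally show "cmod (cinner (A *v h y) (B *v k y)) \<le> K1^2 / 4 * (norm (h y))^2 + K2^2 * (norm (k y))^2"
      by (simp add: power_mult_distrib)
  qed simp
qed

lemma U_pointwise:
  assumes "finite S" "resolution_of_unity S P"
  shows "cinner (U_op S P C h x) (U_op S P C k x)
       = (\<Sum>\<alpha>\<in>S. cinner (C *v h (x - \<alpha>)) ((P \<alpha> ** C) *v k (x - \<alpha>)))"
  unfolding U_op_def by (subst pointwise_orth[OF assms]) (simp add: matrix_vector_mul_assoc)

lemma U_inner:
  assumes fin: "finite S" and res: "resolution_of_unity S P" and uni: "unitary_mat C"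
    and l2h: "l2_fun h" and l2k: "l2_fun k"
  shows "(\<lambda>x. cinner (U_op S P C h x) (U_op S P C k x)) summable_on UNIV \<and>
         infsum (\<lambda>x. cinner (U_op S P C h x) (U_op S P C k x)) UNIV = infsum (\<lambda>x. cinner (h x) (k x)) UNIV"
proof -
  define G where "G \<alpha> y = cinner (C *v h y) ((P \<alpha> ** C) *v k y)" for \<alpha> y
  have pw: "(\<lambda>x. cinner (U_op S P C h x) (U_op S P C k x)) = (\<lambda>x. \<Sum>\<alpha>\<in>S. G \<alpha> (x - \<alpha>))"
    using U_pointwise[OF fin res] by (simp add: G_def)
  have absG: "(\<lambda>y. cmod (G \<alpha> y)) summable_on UNIV" for \<alpha>
    unfolding G_def by (rule abs_summable_inner[OF l2h l2k])
  have sG: "G \<alpha> summable_on UNIV" for \<alpha> using abs_summable_summable absG by blast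
  have sG': "(\<lambda>x. G \<alpha> (x - \<alpha>)) summable_on UNIV" for \<alpha>
    using summable_on_reindex_bij_betw[OF bij_shift, of "G \<alpha>" \<alpha>] sG by blast
  have iG: "infsum (\<lambda>x. G \<alpha> (x - \<alpha>)) UNIV = infsum (G \<alpha>) UNIV" for \<alpha>
    by (rule infsum_reindex_bij_betw[OF bij_shift])
  have A1: "(\<lambda>x. \<Sum>\<alpha>\<in>S. G \<alpha> (x - \<alpha>)) summable_on UNIV \<and>
     infsum (\<lambda>x. \<Sum>\<alpha>\<in>S. G \<alpha> (x - \<alpha>)) UNIV = (\<Sum>\<alpha>\<in>S. infsum (\<lambda>x. G \<alpha> (x - \<alpha>)) UNIV)"
    using infsum_finite_sum[of S "\<lambda>\<alpha> x. G \<alpha> (x - \<alpha>)" UNIV] fin sG' by blast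
  have A2: "infsum (\<lambda>y. \<Sum>\<alpha>\<in>S. G \<alpha> y) UNIV = (\<Sum>\<alpha>\<in>S. infsum (G \<alpha>) UNIV)"
    using infsum_finite_sum[of S G UNIV] fin sG by blast
  have A3: "(\<Sum>\<alpha>\<in>S. G \<alpha> y) = cinner (h y) (k y)" for y
  proof -
    have "(\<Sum>\<alpha>\<in>S. G \<alpha> y) = (\<Sum>\<alpha>\<in>S. cinner (C *v h y) (P \<alpha> *v (C *v k y)))"
      by (simp add: G_def matrix_vector_mul_assoc)
    also have "\<dots> = cinner (C *v h y) (C *v k y)" by (rule res_sum[OF res])
    also have "\<dots> = cinner (h y) (k y)" by (rule unitary_inner[OF uni])
    finally show ?thesis .
  qed
  show ?thesis unfolding pw using A1 A2 A3 iG by simp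
qed

lemma l2_U:
  assumes fin: "finite S" and res: "resolution_of_unity S P" and l2h: "l2_fun h"
  shows "l2_fun (U_op S P C h)"
proof -
  define G where "G \<alpha> y = cinner (C *v h y) ((P \<alpha> ** C) *v h y)" for \<alpha> y
  have absG: "(\<lambda>y. cmod (G \<alpha> y)) summable_on UNIV" for \<alpha>
    unfolding G_def by (rule abs_summable_inner[OF l2h l2h])
  have sG': "(\<lambda>x. cmod (G \<alpha> (x - \<alpha>))) summable_on UNIV" for \<alpha>
    using summable_on_reindex_bij_betw[OF bij_shift, of "\<lambda>y. cmod (G \<alpha> y)" \<alpha>] absG by blast
  have S1: "(\<lambda>x. \<Sum>\<alpha>\<in>S. cmod (G \<alpha> (x - \<alpha>))) summable_on UNIV"
    using infsum_finite_sum[of S "\<lambda>\<alpha> x. cmod (G \<alpha> (x - \<alpha>))" UNIV] fin sG' by blast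
  show ?thesis unfolding l2_fun_def
  proof (rule summable_on_comparison_test[OF S1])
    fix x
    have eq: "complex_of_real ((norm (U_op S P C h x))^2) = (\<Sum>\<alpha>\<in>S. G \<alpha> (x - \<alpha>))"
      using U_pointwise[OF fin res, of C h x h] unfolding G_def cinner_self .
    have "(norm (U_op S P C h x))^2 = cmod (complex_of_real ((norm (U_op S P C h x))^2))"
      by (metis abs_of_nonneg norm_of_real zero_le_power2)
    also have "\<dots> = cmod (\<Sum>\<alpha>\<in>S. G \<alpha> (x - \<alpha>))" by (rule arg_cong[OF eq])
    also have "\<dots> \<le> (\<Sum>\<alpha>\<in>S. cmod (G \<alpha> (x - \<alpha>)))" by (rule norm_sum)
    finally show "(norm (U_op S P C h x))^2 \<le> (\<Sum>\<alpha>\<in>S. cmod (G \<alpha> (x - \<alpha>)))" .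
  qed simp
qed

lemma cinner_scale_left: "cinner (c *s v) w = c * cinner v w"
  unfolding cinner_def by (simp add: sum_distrib_left mult_ac)

lemma IP_self:
  assumes "l2_fun h"
  shows "infsum (\<lambda>x. cinner (h x) (h x)) UNIV = complex_of_real (infsum (\<lambda>x. (norm (h x))^2) UNIV)"
proof -
  have "((\<lambda>x. (norm (h x))^2) has_sum infsum (\<lambda>x. (norm (h x))^2) UNIV) UNIV"
    using assms unfolding l2_fun_def by (rule has_sum_infsum)
  then have "((\<lambda>x. complex_of_real ((norm (h x))^2)) has_sum complex_of_real (infsum (\<lambda>x. (norm (h x))^2) UNIV)) UNIV"
    by (rule has_sum_of_real)
  then show ?thesis unfolding cinner_self by (rule infsumI)
qed

lemma U_iter:
  assumes fin: "finite S" and res: "resolution_of_unity S P" and uni: "unitary_mat C"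
    and l2h: "l2_fun h" and l2k: "l2_fun k"
  shows "l2_fun ((U_op S P C ^^ n) h) \<and>
    infsum (\<lambda>x. cinner ((U_op S P C ^^ n) h x) ((U_op S P C ^^ n) k x)) UNIV = infsum (\<lambda>x. cinner (h x) (k x)) UNIV"
proof (induction n)
  case 0 then show ?case using l2h by simp
next
  case (Suc n)
  have l2k': "l2_fun ((U_op S P C ^^ n) k)"
  proof (induction n)
    case 0 then show ?case using l2k by simp
  next
    case (Suc n) then show ?case using l2_U[OF fin res] by simp
  qed
  show ?case using Suc l2_U[OF fin res] U_inner[OF fin res uni _ l2k'] by simp
qed

lemma U_shift: "U_op S P C (\<lambda>x. h (x - y)) = (\<lambda>x. U_op S P C h (x - y))"
  unfolding U_op_def by (simp add: algebra_simps)

lemma U_shift_iter: "(U_op S P C ^^ n) (\<lambda>x. h (x - y)) = (\<lambda>x. (U_op S P C ^^ n) h (x - y))"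
  by (induction n) (simp_all add: U_shift)

lemma single_has_sum:
  fixes F :: "int^'d \<Rightarrow> 'b::{comm_monoid_add,topological_space}"
  assumes "\<And>x. x \<noteq> y \<Longrightarrow> F x = 0"
  shows "(F has_sum F y) UNIV"
  by (rule has_sum_finite_neutralI[of "{y}"]) (use assms in auto)

theorem lemma2p2:
  fixes S :: "(int^'d) set" and P :: "int^'d \<Rightarrow> complex^'D^'D" and C :: "complex^'D^'D"
  assumes "finite S"
    and "resolution_of_unity S P"
    and "unitary_mat C"
    and "has_eigenvalue S P C"
  shows "\<exists>\<phi>::complex^'D. \<exists>xo::int^'d. \<phi> \<noteq> 0 \<and>
           limsup (\<lambda>n. ereal (p_prob S P C n \<phi> xo)) > 0"
proof (rule ccontr)
  assume H: "\<not> ?thesis"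
  note fin = assms(1) and res = assms(2) and uni = assms(3)
  from assms(4) obtain \<mu> f where l2f: "l2_fun f" and fnz: "f \<noteq> (\<lambda>x. 0)"
    and Uf: "U_op S P C f = (\<lambda>x. \<mu> *s f x)" unfolding has_eigenvalue_def by blast
  from fnz obtain y where fy: "f y \<noteq> 0" by auto
  define \<phi> where "\<phi> = f y"
  define c where "c = (norm \<phi>)^2"
  have cpos: "c > 0" using fy by (simp add: c_def \<phi>_def)
  define Nf where "Nf = infsum (\<lambda>x. (norm (f x))^2) UNIV"
  have sf: "(\<lambda>x. (norm (f x))^2) summable_on UNIV" using l2f unfolding l2_fun_def .
  have IPff: "infsum (\<lambda>x. cinner (f x) (f x)) UNIV = complex_of_real Nf"
    using IP_self[OF l2f] unfolding Nf_def .
  have "(norm (f y))^2 \<le> Nf"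
  proof -
    have "infsum (\<lambda>x. (norm (f x))^2) {y} \<le> infsum (\<lambda>x. (norm (f x))^2) UNIV"
      by (rule infsum_mono_neutral[OF _ sf]) auto
    then show ?thesis unfolding Nf_def by simp
  qed
  then have Nfpos: "Nf > 0" using cpos unfolding c_def \<phi>_def by linarith
  have key: "cnj \<mu> * infsum (\<lambda>x. cinner (U_op S P C h x) (f x)) UNIV = infsum (\<lambda>x. cinner (h x) (f x)) UNIV"
    if l2h: "l2_fun h" for h
  proof -
    have "infsum (\<lambda>x. cinner (U_op S P C h x) (U_op S P C f x)) UNIV = infsum (\<lambda>x. cinner (h x) (f x)) UNIV"
      using U_inner[OF fin res uni l2h l2f] by blast
    then show ?thesis unfolding Uf cinner_scale_right infsum_cmult_right' .
  qed
  have "cnj \<mu> * (\<mu> * complex_of_real Nf) = complex_of_real Nf"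
    using key[OF l2f] unfolding Uf cinner_scale_left infsum_cmult_right' IPff .
  then have "cnj \<mu> * \<mu> = 1" using Nfpos by (simp add: field_simps)
  then have "(cmod \<mu>)^2 = 1"
    by (metis complex_norm_square mult.commute norm_one of_real_eq_1_iff)
  then have "cmod \<mu> = 1 \<or> cmod \<mu> = -1" by (simp add: power2_eq_1_iff)
  then have mu1: "cmod \<mu> = 1" using norm_ge_zero[of \<mu>] by linarith
  have keyn: "cmod (infsum (\<lambda>x. cinner (U_op S P C h x) (f x)) UNIV) = cmod (infsum (\<lambda>x. cinner (h x) (f x)) UNIV)"
    if l2h: "l2_fun h" for h
    using arg_cong[OF key[OF l2h], of cmod] mu1 by (simp add: norm_mult)
  define g where "g = (\<lambda>x. delta0 \<phi> (x - y))"
  have g_eq: "g x = (if x = y then \<phi> else 0)" for x unfolding g_def delta0_def by simp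
  have hsg: "((\<lambda>x. (norm (g x))^2) has_sum c) UNIV"
    using single_has_sum[of y "\<lambda>x. (norm (g x))^2"] by (simp add: g_eq c_def)
  have l2g: "l2_fun g" unfolding l2_fun_def using hsg summable_on_def by blast
  have Ng: "infsum (\<lambda>x. (norm (g x))^2) UNIV = c" using hsg by (rule infsumI)
  have "((\<lambda>x. cinner (g x) (f x)) has_sum cinner (g y) (f y)) UNIV"
    by (rule single_has_sum) (simp add: g_eq)
  then have IPgf: "infsum (\<lambda>x. cinner (g x) (f x)) UNIV = complex_of_real c"
    by (simp add: infsumI g_eq \<phi>_def c_def cinner_self)
  define a where "a n = (U_op S P C ^^ n) g" for n
  have l2a: "l2_fun (a n)" for n using U_iter[OF fin res uni l2g l2g] unfolding a_def by blast
  have Na: "infsum (\<lambda>x. (norm (a n x))^2) UNIV = c" for n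
  proof -
    have "infsum (\<lambda>x. cinner (a n x) (a n x)) UNIV = infsum (\<lambda>x. cinner (g x) (g x)) UNIV"
      using U_iter[OF fin res uni l2g l2g] unfolding a_def by blast
    then show ?thesis unfolding IP_self[OF l2a] IP_self[OF l2g] Ng by simp
  qed
  have cm: "cmod (infsum (\<lambda>x. cinner (a n x) (f x)) UNIV) = c" for n
  proof (induction n)
    case 0 then show ?case by (simp add: a_def IPgf cpos less_imp_le)
  next
    case (Suc n)
    have "a (Suc n) = U_op S P C (a n)" by (simp add: a_def)
    then show ?case using keyn[OF l2a[of n]] Suc by simp
  qed
  have pa: "(norm (a n x))^2 = p_prob S P C n \<phi> (x - y)" for n x
    unfolding a_def g_def p_prob_def U_shift_iter ..
  have \<phi>nz: "\<phi> \<noteq> 0" using fy \<phi>_def by simp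
  have lim: "limsup (\<lambda>n. ereal (p_prob S P C n \<phi> xo)) \<le> 0" for xo
    using H \<phi>nz by (auto simp: not_less)
  obtain F where finF: "finite F" and tailf: "infsum (\<lambda>x. (norm (f x))^2) (- F) < c / 4"
  proof -
    have "((\<lambda>x. (norm (f x))^2) has_sum Nf) UNIV" unfolding Nf_def using sf by (rule has_sum_infsum)
    then have "(sum (\<lambda>x. (norm (f x))^2) \<longlongrightarrow> Nf) (finite_subsets_at_top UNIV)"
      unfolding has_sum_def .
    then have "eventually (\<lambda>X. dist (sum (\<lambda>x. (norm (f x))^2) X) Nf < c / 4) (finite_subsets_at_top UNIV)"
      using cpos by (intro tendstoD) auto
    then obtain X where finX: "finite X" and dX: "dist (sum (\<lambda>x. (norm (f x))^2) X) Nf < c / 4"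
      unfolding eventually_finite_subsets_at_top by blast
    have "infsum (\<lambda>x. (norm (f x))^2) (X \<union> - X) = infsum (\<lambda>x. (norm (f x))^2) X + infsum (\<lambda>x. (norm (f x))^2) (- X)"
      by (rule infsum_Un_disjoint) (use finX summable_on_subset_banach[OF sf] in auto)
    then have "Nf = sum (\<lambda>x. (norm (f x))^2) X + infsum (\<lambda>x. (norm (f x))^2) (- X)"
      unfolding Nf_def using finX by simp
    then have "infsum (\<lambda>x. (norm (f x))^2) (- X) < c / 4" using dX by (simp add: dist_real_def)
    then show ?thesis using that finX by blast
  qed
  define M where "M = (\<Sum>x\<in>F. \<Sum>i\<in>UNIV. cmod (f x $ i))"
  have M0: "M \<ge> 0" unfolding M_def by (intro sum_nonneg) auto
  define \<delta> where "\<delta> = c / (4 * (M + 1))"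
  have \<delta>pos: "\<delta> > 0" using cpos M0 by (simp add: \<delta>_def)
  have \<delta>M: "\<delta> * M < c / 4"
  proof -
    have "\<delta> * M = c / 4 * (M / (M + 1))" by (simp add: \<delta>_def field_simps)
    also have "\<dots> < c / 4 * 1" using M0 cpos by (intro mult_strict_left_mono) auto
    finally show ?thesis by simp
  qed
  have ev: "eventually (\<lambda>n. \<forall>x\<in>F. norm (a n x) < \<delta>) sequentially"
  proof (rule eventually_ball_finite[OF finF], rule ballI)
    fix x
    have "limsup (\<lambda>n. ereal (p_prob S P C n \<phi> (x - y))) < ereal (\<delta>^2)"
      using lim[of "x - y"] \<delta>pos by (simp add: le_less_trans)
    then have "eventually (\<lambda>n. ereal (p_prob S P C n \<phi> (x - y)) < ereal (\<delta>^2)) sequentially"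
      by (rule Limsup_lessD)
    then show "eventually (\<lambda>n. norm (a n x) < \<delta>) sequentially"
    proof (rule eventually_mono)
      fix n assume "ereal (p_prob S P C n \<phi> (x - y)) < ereal (\<delta>^2)"
      then have "(norm (a n x))^2 < \<delta>^2" using pa by simp
      then show "norm (a n x) < \<delta>" using \<delta>pos power_less_imp_less_base[of "norm (a n x)" 2 \<delta>] by simp
    qed
  qed
  then obtain n where hn: "\<forall>x\<in>F. norm (a n x) < \<delta>" unfolding eventually_sequentially by blast
  define A where "A = a n"
  define I where "I x = cinner (A x) (f x)" for x
  have absI: "(\<lambda>x. cmod (I x)) summable_on UNIV"
    using abs_summable_inner[OF l2a[of n] l2f, of "mat 1" "mat 1"] unfolding I_def A_def by simp
  have sI: "I summable_on UNIV" using abs_summable_summable absI by blast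
  have split: "infsum I UNIV = sum I F + infsum I (- F)"
  proof -
    have "infsum I (F \<union> - F) = infsum I F + infsum I (- F)"
      by (rule infsum_Un_disjoint) (use finF summable_on_subset_banach[OF sI] in auto)
    then show ?thesis using finF by simp
  qed
  have finb: "cmod (sum I F) < c / 4"
  proof -
    have "cmod (sum I F) \<le> (\<Sum>x\<in>F. cmod (I x))" by (rule norm_sum)
    also have "\<dots> \<le> (\<Sum>x\<in>F. \<delta> * (\<Sum>i\<in>UNIV. cmod (f x $ i)))"
    proof (rule sum_mono)
      fix x assume "x \<in> F"
      then have "norm (A x) \<le> \<delta>" using hn unfolding A_def by auto
      moreover have "cmod (I x) \<le> norm (A x) * (\<Sum>i\<in>UNIV. cmod (f x $ i))"
        unfolding I_def by (rule cinner_bound2)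
      ultimately show "cmod (I x) \<le> \<delta> * (\<Sum>i\<in>UNIV. cmod (f x $ i))"
        by (meson mult_right_mono order_trans sum_nonneg norm_ge_zero)
    qed
    also have "\<dots> = \<delta> * M" unfolding M_def by (simp add: sum_distrib_left)
    finally show ?thesis using \<delta>M by linarith
  qed
  have sA: "(\<lambda>x. (norm (A x))^2) summable_on UNIV" using l2a[of n] unfolding A_def l2_fun_def .
  have sA': "(\<lambda>x. (norm (A x))^2) summable_on (- F)" using summable_on_subset_banach[OF sA] by blast
  have sf': "(\<lambda>x. (norm (f x))^2) summable_on (- F)" using summable_on_subset_banach[OF sf] by blast
  have tailA: "infsum (\<lambda>x. (norm (A x))^2) (- F) \<le> c"
  proof -
    have "infsum (\<lambda>x. (norm (A x))^2) (- F) \<le> infsum (\<lambda>x. (norm (A x))^2) UNIV"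
      by (rule infsum_mono_neutral[OF sA' sA]) auto
    then show ?thesis using Na[of n] unfolding A_def by simp
  qed
  have tailb: "cmod (infsum I (- F)) < c / 2"
  proof -
    have absI': "(\<lambda>x. cmod (I x)) summable_on (- F)" using summable_on_subset_banach[OF absI] by blast
    have "cmod (infsum I (- F)) \<le> infsum (\<lambda>x. cmod (I x)) (- F)"
      by (rule norm_infsum_bound[OF absI'])
    also have "\<dots> \<le> infsum (\<lambda>x. (1/4) * (norm (A x))^2 + (norm (f x))^2) (- F)"
    proof (rule infsum_mono[OF absI'])
      show "(\<lambda>x. (1/4) * (norm (A x))^2 + (norm (f x))^2) summable_on (- F)"
        by (intro summable_on_add summable_on_cmult_right sA' sf')
      fix x
      show "cmod (I x) \<le> (1/4) * (norm (A x))^2 + (norm (f x))^2"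
        using cinner_bound[of "A x" "f x"] unfolding I_def by simp
    qed
    also have "\<dots> = (1/4) * infsum (\<lambda>x. (norm (A x))^2) (- F) + infsum (\<lambda>x. (norm (f x))^2) (- F)"
      by (subst infsum_add[OF summable_on_cmult_right[OF sA'] sf'], subst infsum_cmult_right[OF sA'], rule refl)
    also have "\<dots> < c / 2" using tailA tailf by simp
    finally show ?thesis .
  qed
  have "c = cmod (infsum I UNIV)" using cm[of n] unfolding I_def A_def by simp
  also have "\<dots> \<le> cmod (sum I F) + cmod (infsum I (- F))" unfolding split by (rule norm_triangle_ineq)
  also have "\<dots> < c" using finb tailb cpos by linarith
  finally show False by simp
qed

end
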